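(* For each $\nu$, each $1\le i\le m$, each $1\le j<l\le N^\nu_i$ and all $\mathbf t,\mathbf u\ge\mathbf0$, $$0\le\mathrm{cov}(\chi^\nu_{i,j}(\mathbf t),\chi^\nu_{i,l}(\mathbf u))\le\sum_{k=1}^m(t_k\wedge u_k)\tilde N^\nu_k\lambda^\nu_{kii}$$ and $$\big|\mathrm{cov}(\chi^\nu_{i,j}(\mathbf t)-\chi^\nu_{i,j}(\mathbf u),\chi^\nu_{i,l}(\mathbf t)-\chi^\nu_{i,l}(\mathbf u))\big|\le 6\Big\{\sum_{k=1}^m\big([(t_k\vee u_k)\tilde N^\nu_k]-[(t_k\wedge u_k)\tilde N^\nu_k]\big)\mu^\nu_{ki}\Big\}\Big\{\sum_{k=1}^m(t_k\wedge u_k)\tilde N^\nu_k\lambda^\nu_{kii}\Big\}+2\sum_{k=1}^m\big([(t_k\vee u_k)\tilde N^\nu_k]-[(t_k\wedge u_k)\tilde N^\nu_k]\big)\lambda^\nu_{kii}.$$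
   Context: Fix $m\ge1$; $[x]$ is the integer part of $x$; sums/products over $1\le l\le x$ mean $1\le l\le[x]$. Fix $\nu$. Given integers $N^\nu_i\ge1$, $N^\nu=\sum_iN^\nu_i$, constants $\pi_i>0$, $\tilde N^\nu_k=N^\nu\pi_k$. Random vectors $\mathbf V^\nu_k=(V^\nu_{k,1},\dots,V^\nu_{k,m})\in[0,1]^m$; $\{\mathbf V^\nu_{(k,l)}:1\le k\le m,l\ge1\}$ independent with $\mathbf V^\nu_{(k,l)}\sim\mathbf V^\nu_k$ (infectivity vector of the $l$-th infective of type $k$). Individuals $(i,j)$, $1\le j\le N^\nu_i$. Conditionally on all infectivity vectors, the events "infective $(k,l)$ contacts individual $(i,j)$" are independent over all pairs with probabilities $V^\nu_{(k,l),i}$. For $\mathbf t=(t_1,\dots,t_m)\ge\mathbf0$, $\chi^\nu_{i,j}(\mathbf t)=1$ if $(i,j)$ is contacted by at least one infective $(k,l)$ with $1\le k\le m$, $1\le l\le t_k\tilde N^\nu_k$, and $0$ otherwise. $\mu^\nu_{ki}=\mathbb E[V^\nu_{k,i}]$, $\lambda^\nu_{kii}=\mathrm{var}(V^\nu_{k,i})$. $a\wedge b=\min$, $a\vee b=\max$. *)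

theory Defs
  imports "HOL-Probability.Probability"
begin

definition cov :: "'a measure \<Rightarrow> ('a \<Rightarrow> real) \<Rightarrow> ('a \<Rightarrow> real) \<Rightarrow> real" where
  "cov M X Y = (\<integral>\<omega>. (X \<omega> - (\<integral>x. X x \<partial>M)) * (Y \<omega> - (\<integral>x. Y x \<partial>M)) \<partial>M)"

text \<open>C k l i j w means that
  infective (k,l) contacts individual (i,j) in outcome w.\<close>
definition chi :: "nat \<Rightarrow> (nat \<Rightarrow> real) \<Rightarrow> (nat \<Rightarrow> nat \<Rightarrow> nat \<Rightarrow> nat \<Rightarrow> 'a \<Rightarrow> bool)
    \<Rightarrow> nat \<Rightarrow> nat \<Rightarrow> (nat \<Rightarrow> real) \<Rightarrow> 'a \<Rightarrow> real" where
  "chi m Nt C i j t \<omega> =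
     (if \<exists>k\<in>{1..m}. \<exists>l. 1 \<le> l \<and> int l \<le> \<lfloor>t k * Nt k\<rfloor> \<and> C k l i j \<omega> then 1 else 0)"

definition Vsigma :: "'a measure \<Rightarrow> nat \<Rightarrow> (nat \<Rightarrow> nat \<Rightarrow> nat \<Rightarrow> 'a \<Rightarrow> real) \<Rightarrow> 'a set set" where
  "Vsigma M m V = sigma_sets (space M)
     {V k l i -` B \<inter> space M | k l i B. k \<in> {1..m} \<and> 1 \<le> l \<and> i \<in> {1..m} \<and> B \<in> sets borel}"

end

theory Submission
  imports Defs
begin

lemma prod_diff_bound:
  fixes x y :: "'b \<Rightarrow> real"
  assumes "finite A" "\<forall>p\<in>A. 0 \<le> y p \<and> y p \<le> x p \<and> x p \<le> 1"
  shows "0 \<le> prod x A - prod y A \<and> prod x A - prod y A \<le> (\<Sum>p\<in>A. x p - y p)"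
  using assms
proof (induction A rule: finite_induct)
  case empty
  then show ?case by simp
next
  case (insert a A)
  have X: "0 \<le> prod y A" "prod y A \<le> prod x A" "prod x A \<le> 1"
    using insert by (auto intro!: prod_nonneg prod_mono prod_le_1)
  have IH: "0 \<le> prod x A - prod y A \<and> prod x A - prod y A \<le> (\<Sum>p\<in>A. x p - y p)"
    using insert by auto
  have a: "0 \<le> y a" "y a \<le> x a" "x a \<le> 1" using insert by auto
  have eq: "prod x (insert a A) - prod y (insert a A) = x a * (prod x A - prod y A) + (x a - y a) * prod y A"
    using insert by (simp add: algebra_simps)
  have "x a * (prod x A - prod y A) \<le> prod x A - prod y A"
    using IH a by (simp add: mult_left_le_one_le)
  moreover have "(x a - y a) * prod y A \<le> x a - y a"
    using X a by (simp add: mult_left_le  mult_right_le_one_le)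
  moreover have "0 \<le> x a * (prod x A - prod y A)" using IH a by simp
  moreover have "0 \<le> (x a - y a) * prod y A" using X a by simp
  moreover have "(\<Sum>p\<in>insert a A. x p - y p) = (x a - y a) + (\<Sum>p\<in>A. x p - y p)" using insert(1,2) by simp
  ultimately show ?case using eq IH by linarith
qed

definition FF :: "(nat \<Rightarrow> real) \<Rightarrow> (nat \<Rightarrow> real) \<Rightarrow> (nat \<times> nat) set \<Rightarrow> (nat \<times> nat) set \<Rightarrow> real" where
  "FF a s Q1 Q2 = (\<Prod>p\<in>Q1\<union>Q2. if p \<in> Q1 \<inter> Q2 then s (fst p) else a (fst p))"

lemma real_part:
  fixes a s :: "nat \<Rightarrow> real" and T U :: "(nat \<times> nat) set"
  assumes fin: "finite T" "finite U"
    and sub: "T \<subseteq> {1..m} \<times> UNIV" "U \<subseteq> {1..m} \<times> UNIV"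
    and as: "\<forall>k\<in>{1..m}. 0 \<le> a k \<and> a k \<le> 1 \<and> (a k)\<^sup>2 \<le> s k \<and> s k \<le> a k"
  shows "0 \<le> FF a s T U - FF a s T {} * FF a s U {}
      \<and> FF a s T U - FF a s T {} * FF a s U {} \<le> (\<Sum>p\<in>T\<inter>U. s (fst p) - (a (fst p))\<^sup>2)"
    and "0 \<le> FF a s U U - 2 * FF a s T U + FF a s T T - (FF a s U {} - FF a s T {})\<^sup>2
      \<and> FF a s U U - 2 * FF a s T U + FF a s T T - (FF a s U {} - FF a s T {})\<^sup>2
        \<le> (\<Sum>p\<in>(T\<union>U)-(T\<inter>U). 1 - a (fst p)) * (\<Sum>p\<in>T\<inter>U. s (fst p) - (a (fst p))\<^sup>2)
          + (\<Sum>p\<in>(T\<union>U)-(T\<inter>U). s (fst p) - (a (fst p))\<^sup>2)"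
proof -
  define I where "I = T \<inter> U"
  define X where "X = U - T"
  define Y where "Y = T - U"
  have fI: "finite I" and fX: "finite X" and fY: "finite Y" using fin by (auto simp: I_def X_def Y_def)
  have pk: "\<And>p. p \<in> T \<union> U \<Longrightarrow> fst p \<in> {1..m}" using sub by auto
  define sI where "sI = (\<Prod>p\<in>I. s (fst p))"
  define sX where "sX = (\<Prod>p\<in>X. s (fst p))"
  define sY where "sY = (\<Prod>p\<in>Y. s (fst p))"
  define aI where "aI = (\<Prod>p\<in>I. a (fst p))"
  define aX where "aX = (\<Prod>p\<in>X. a (fst p))"
  define aY where "aY = (\<Prod>p\<in>Y. a (fst p))"
  define aI2 where "aI2 = (\<Prod>p\<in>I. (a (fst p))\<^sup>2)"
  define aX2 where "aX2 = (\<Prod>p\<in>X. (a (fst p))\<^sup>2)"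
  define aY2 where "aY2 = (\<Prod>p\<in>Y. (a (fst p))\<^sup>2)"
  have aI2: "aI2 = aI^2" unfolding aI2_def aI_def by (simp add: prod_power_distrib)
  have aX2: "aX2 = aX^2" unfolding aX2_def aX_def by (simp add: prod_power_distrib)
  have aY2: "aY2 = aY^2" unfolding aY2_def aY_def by (simp add: prod_power_distrib)
  have TU: "T \<union> U = I \<union> (X \<union> Y)" "U = I \<union> X" "T = I \<union> Y"
    by (auto simp: I_def X_def Y_def)
  have dj: "I \<inter> (X \<union> Y) = {}" "X \<inter> Y = {}" "I \<inter> X = {}" "I \<inter> Y = {}"
    by (auto simp: I_def X_def Y_def)
  have F_TU: "FF a s T U = sI * aX * aY"
  proof -
    have "FF a s T U = (\<Prod>p\<in>I. if p \<in> T \<inter> U then s (fst p) else a (fst p)) *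
       ((\<Prod>p\<in>X. if p \<in> T \<inter> U then s (fst p) else a (fst p)) * (\<Prod>p\<in>Y. if p \<in> T \<inter> U then s (fst p) else a (fst p)))"
      unfolding FF_def TU(1) using fI fX fY dj by (simp add: prod.union_disjoint)
    also have "\<dots> = sI * (aX * aY)" unfolding sI_def aX_def aY_def
      by (intro arg_cong2[where f="(*)"] prod.cong) (auto simp: I_def X_def Y_def)
    finally show ?thesis by simp
  qed
  have F_UU: "FF a s U U = sI * sX"
  proof -
    have "FF a s U U = (\<Prod>p\<in>I \<union> X. s (fst p))" unfolding FF_def by (simp add: TU(2)[symmetric])
    then show ?thesis using fI fX dj unfolding sI_def sX_def by (simp add: prod.union_disjoint)
  qed
  have F_TT: "FF a s T T = sI * sY"
  proof -
    have "FF a s T T = (\<Prod>p\<in>I \<union> Y. s (fst p))" unfolding FF_def by (simp add: TU(3)[symmetric])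
    then show ?thesis using fI fY dj unfolding sI_def sY_def by (simp add: prod.union_disjoint)
  qed
  have F_U: "FF a s U {} = aI * aX"
  proof -
    have "FF a s U {} = (\<Prod>p\<in>I \<union> X. a (fst p))" unfolding FF_def by (simp add: TU(2)[symmetric])
    then show ?thesis using fI fX dj unfolding aI_def aX_def by (simp add: prod.union_disjoint)
  qed
  have F_T: "FF a s T {} = aI * aY"
  proof -
    have "FF a s T {} = (\<Prod>p\<in>I \<union> Y. a (fst p))" unfolding FF_def by (simp add: TU(3)[symmetric])
    then show ?thesis using fI fY dj unfolding aI_def aY_def by (simp add: prod.union_disjoint)
  qed
  have pa: "\<And>p. p \<in> T \<union> U \<Longrightarrow> 0 \<le> a (fst p) \<and> a (fst p) \<le> 1 \<and> (a (fst p))\<^sup>2 \<le> s (fst p) \<and> s (fst p) \<le> a (fst p)"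
    using as pk by blast
  have sub3: "I \<subseteq> T \<union> U" "X \<subseteq> T \<union> U" "Y \<subseteq> T \<union> U" using TU by auto
  have pb: "\<forall>p\<in>Z. 0 \<le> (a (fst p))\<^sup>2 \<and> (a (fst p))\<^sup>2 \<le> s (fst p) \<and> s (fst p) \<le> 1" if "Z \<subseteq> T \<union> U" for Z
    using pa that by fastforce
  have pc: "\<forall>p\<in>Z. 0 \<le> a (fst p) \<and> a (fst p) \<le> 1 \<and> (1::real) \<le> 1" if "Z \<subseteq> T \<union> U" for Z
    using pa that by fastforce
  have bI: "0 \<le> sI - aI2 \<and> sI - aI2 \<le> (\<Sum>p\<in>I. s (fst p) - (a (fst p))\<^sup>2)"
    unfolding sI_def aI2_def by (rule prod_diff_bound[OF fI pb[OF sub3(1)]])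
  have bX: "0 \<le> sX - aX2 \<and> sX - aX2 \<le> (\<Sum>p\<in>X. s (fst p) - (a (fst p))\<^sup>2)"
    unfolding sX_def aX2_def by (rule prod_diff_bound[OF fX pb[OF sub3(2)]])
  have bY: "0 \<le> sY - aY2 \<and> sY - aY2 \<le> (\<Sum>p\<in>Y. s (fst p) - (a (fst p))\<^sup>2)"
    unfolding sY_def aY2_def by (rule prod_diff_bound[OF fY pb[OF sub3(3)]])
  have cX: "0 \<le> 1 - aX \<and> 1 - aX \<le> (\<Sum>p\<in>X. 1 - a (fst p))"
    using prod_diff_bound[OF fX pc[OF sub3(2)]] unfolding aX_def by simp
  have cY: "0 \<le> 1 - aY \<and> 1 - aY \<le> (\<Sum>p\<in>Y. 1 - a (fst p))"
    using prod_diff_bound[OF fY pc[OF sub3(3)]] unfolding aY_def by simp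
  have sI0: "\<forall>p\<in>I. 0 \<le> s (fst p)" using pb[OF sub3(1)] by (meson order_trans zero_le_power2)
  have r01: "0 \<le> aX" "0 \<le> aY" "0 \<le> sI" "sI \<le> 1" "0 \<le> aI" "aI \<le> 1" "aX \<le> 1" "aY \<le> 1"
    unfolding aX_def aY_def sI_def aI_def using sI0 pb[OF sub3(1)] pc[OF sub3(1)] pc[OF sub3(2)] pc[OF sub3(3)]
    by (auto intro!: prod_nonneg prod_le_1)
  have sumI: "(\<Sum>p\<in>T\<inter>U. s (fst p) - (a (fst p))\<^sup>2) = (\<Sum>p\<in>I. s (fst p) - (a (fst p))\<^sup>2)" by (simp add: I_def)
  have XY: "(T\<union>U)-(T\<inter>U) = X \<union> Y" by (auto simp: X_def Y_def)
  have sumXY: "(\<Sum>p\<in>(T\<union>U)-(T\<inter>U). f p) = (\<Sum>p\<in>X. f p) + (\<Sum>p\<in>Y. f p)" for f :: "nat \<times> nat \<Rightarrow> real"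
    unfolding XY using fX fY dj by (simp add: sum.union_disjoint)
  show "0 \<le> FF a s T U - FF a s T {} * FF a s U {}
      \<and> FF a s T U - FF a s T {} * FF a s U {} \<le> (\<Sum>p\<in>T\<inter>U. s (fst p) - (a (fst p))\<^sup>2)"
  proof -
    have eq: "FF a s T U - FF a s T {} * FF a s U {} = (sI - aI2) * (aX * aY)"
      unfolding F_TU F_T F_U aI2 by (simp add: algebra_simps power2_eq_square)
    have "0 \<le> aX * aY" "aX * aY \<le> 1" using r01 by (auto intro: mult_le_one)
    moreover have "(sI - aI2) * (aX * aY) \<le> sI - aI2"
      using bI calculation by (intro mult_right_le_one_le) auto
    ultimately show ?thesis unfolding eq sumI using bI by auto
  qed
  show "0 \<le> FF a s U U - 2 * FF a s T U + FF a s T T - (FF a s U {} - FF a s T {})\<^sup>2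
      \<and> FF a s U U - 2 * FF a s T U + FF a s T T - (FF a s U {} - FF a s T {})\<^sup>2
        \<le> (\<Sum>p\<in>(T\<union>U)-(T\<inter>U). 1 - a (fst p)) * (\<Sum>p\<in>T\<inter>U. s (fst p) - (a (fst p))\<^sup>2)
          + (\<Sum>p\<in>(T\<union>U)-(T\<inter>U). s (fst p) - (a (fst p))\<^sup>2)"
  proof -
    have eq: "FF a s U U - 2 * FF a s T U + FF a s T T - (FF a s U {} - FF a s T {})\<^sup>2
       = sI * ((sX - aX2) + (sY - aY2)) + (sI - aI2) * (aX - aY)\<^sup>2"
      unfolding F_TU F_T F_U F_UU F_TT aI2 aX2 aY2 by (simp add: algebra_simps power2_eq_square)
    have d1: "(aX - aY)\<^sup>2 \<le> (1 - aX) + (1 - aY)"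
    proof -
      have "(aX - aY)\<^sup>2 = \<bar>aX - aY\<bar> * \<bar>aX - aY\<bar>" by (simp add: power2_eq_square)
      also have "\<dots> \<le> \<bar>aX - aY\<bar> * 1" using r01 by (intro mult_left_mono) auto
      finally show ?thesis using r01 by auto
    qed
    have t1: "sI * ((sX - aX2) + (sY - aY2)) \<le> (sX - aX2) + (sY - aY2)"
      using r01 bX bY by (intro mult_left_le_one_le) auto
    have t2: "(sI - aI2) * (aX - aY)\<^sup>2 \<le> (\<Sum>p\<in>I. s (fst p) - (a (fst p))\<^sup>2) * ((\<Sum>p\<in>X. 1 - a (fst p)) + (\<Sum>p\<in>Y. 1 - a (fst p)))"
      using bI d1 cX cY by (intro mult_mono) auto
    have n1: "0 \<le> sI * ((sX - aX2) + (sY - aY2))" using r01 bX bY by auto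
    have n2: "0 \<le> (sI - aI2) * (aX - aY)\<^sup>2" using bI by auto
    show ?thesis unfolding eq sumI sumXY using t1 t2 n1 n2 bX bY
      by (simp add: algebra_simps)
  qed
qed


lemma indep_prod:
  fixes V :: "nat \<Rightarrow> nat \<Rightarrow> nat \<Rightarrow> 'a \<Rightarrow> real" and f :: "nat \<times> nat \<Rightarrow> real \<Rightarrow> real"
  assumes M: "prob_space M"
    and ind: "prob_space.indep_vars M (\<lambda>_. PiM {1..m} (\<lambda>_. (borel :: real measure)))
                    (\<lambda>(k, l) \<omega>. restrict (\<lambda>i. V k l i \<omega>) {1..m}) ({1..m} \<times> {1..})"
    and Vm: "\<forall>k l i. V k l i \<in> borel_measurable M"
    and Q: "finite Q" "Q \<subseteq> {1..m} \<times> {1..}" and i: "i \<in> {1..m}"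
    and fm: "\<And>p. p \<in> Q \<Longrightarrow> f p \<in> borel_measurable borel"
    and fb: "\<And>p \<omega>. p \<in> Q \<Longrightarrow> \<omega> \<in> space M \<Longrightarrow> \<bar>f p (V (fst p) (snd p) i \<omega>)\<bar> \<le> 1"
  shows "(\<integral>\<omega>. (\<Prod>p\<in>Q. f p (V (fst p) (snd p) i \<omega>)) \<partial>M) = (\<Prod>p\<in>Q. \<integral>\<omega>. f p (V (fst p) (snd p) i \<omega>) \<partial>M)"
proof -
  interpret prob_space M by (rule M)
  have ind1: "indep_vars (\<lambda>_. PiM {1..m} (\<lambda>_. (borel :: real measure)))
                    (\<lambda>(k, l) \<omega>. restrict (\<lambda>i. V k l i \<omega>) {1..m}) Q"
    using indep_vars_subset[OF ind Q(2)] .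
  have ind2: "indep_vars (\<lambda>_. borel) (\<lambda>p x. (\<lambda>y. f p (y i)) ((\<lambda>(k, l) \<omega>. restrict (\<lambda>i. V k l i \<omega>) {1..m}) p x)) Q"
  proof (rule indep_vars_compose2[OF ind1])
    fix p assume "p \<in> Q"
    show "(\<lambda>y. f p (y i)) \<in> PiM {1..m} (\<lambda>_. borel) \<rightarrow>\<^sub>M borel"
      using measurable_component_singleton[OF i, of "\<lambda>_. borel"] fm[OF \<open>p \<in> Q\<close>]
      by (rule measurable_compose)
  qed
  have ind3: "indep_vars (\<lambda>_. borel) (\<lambda>p \<omega>. f p (V (fst p) (snd p) i \<omega>)) Q"
    using ind2 by (rule indep_vars_cong[THEN iffD1, rotated -1]) (use i in \<open>auto split: prod.splits\<close>)
  show ?thesis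
  proof (rule indep_vars_lebesgue_integral[OF Q(1) ind3])
    fix p assume p: "p \<in> Q"
    show "integrable M (\<lambda>\<omega>. f p (V (fst p) (snd p) i \<omega>))"
    proof (rule integrable_const_bound[where B=1])
      show "AE x in M. norm (f p (V (fst p) (snd p) i x)) \<le> 1" using fb[OF p] by auto
      show "(\<lambda>\<omega>. f p (V (fst p) (snd p) i \<omega>)) \<in> borel_measurable M"
        using Vm fm[OF p] by (blast intro: measurable_compose)
    qed
  qed
qed

lemma ident_int:
  fixes V :: "nat \<Rightarrow> nat \<Rightarrow> nat \<Rightarrow> 'a \<Rightarrow> real" and h :: "real \<Rightarrow> real"
  assumes Vm: "\<forall>k l i. V k l i \<in> borel_measurable M"
    and eq: "distr M (PiM {1..m} (\<lambda>_. (borel :: real measure))) (\<lambda>\<omega>. restrict (\<lambda>i. V k l i \<omega>) {1..m})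
                  = distr M (PiM {1..m} (\<lambda>_. (borel :: real measure))) (\<lambda>\<omega>. restrict (\<lambda>i. V k 1 i \<omega>) {1..m})"
    and i: "i \<in> {1..m}" and hm: "h \<in> borel_measurable borel"
  shows "(\<integral>\<omega>. h (V k l i \<omega>) \<partial>M) = (\<integral>\<omega>. h (V k 1 i \<omega>) \<partial>M)"
proof -
  have R: "(\<lambda>\<omega>. restrict (\<lambda>i. V k l' i \<omega>) {1..m}) \<in> M \<rightarrow>\<^sub>M PiM {1..m} (\<lambda>_. (borel :: real measure))" for l'
    using Vm by (intro measurable_restrict) auto
  have H: "(\<lambda>y. h (y i)) \<in> borel_measurable (PiM {1..m} (\<lambda>_. (borel :: real measure)))"
    using measurable_component_singleton[OF i, of "\<lambda>_. borel"] hm by (rule measurable_compose)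
  have "(\<integral>\<omega>. h (V k l' i \<omega>) \<partial>M) = (\<integral>y. h (y i) \<partial>distr M (PiM {1..m} (\<lambda>_. (borel :: real measure))) (\<lambda>\<omega>. restrict (\<lambda>i. V k l' i \<omega>) {1..m}))" for l'
    using integral_distr[OF R H] i by simp
  then show ?thesis using eq by metis
qed

lemma cov_eq:
  fixes X Y :: "'a \<Rightarrow> real"
  assumes M: "prob_space M" and Xm: "X \<in> borel_measurable M" and Ym: "Y \<in> borel_measurable M"
    and bd: "\<forall>\<omega>\<in>space M. \<bar>X \<omega>\<bar> \<le> 2 \<and> \<bar>Y \<omega>\<bar> \<le> 2"
  shows "cov M X Y = (\<integral>\<omega>. X \<omega> * Y \<omega> \<partial>M) - (\<integral>\<omega>. X \<omega> \<partial>M) * (\<integral>\<omega>. Y \<omega> \<partial>M)"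
proof -
  interpret prob_space M by (rule M)
  have iX: "integrable M X" by (rule integrable_const_bound[where B=2]) (use bd Xm in auto)
  have iY: "integrable M Y" by (rule integrable_const_bound[where B=2]) (use bd Ym in auto)
  have iXY: "integrable M (\<lambda>\<omega>. X \<omega> * Y \<omega>)"
  proof (rule integrable_const_bound[where B=4])
    show "AE x in M. norm (X x * Y x) \<le> 4"
    proof (rule AE_I2)
      fix x assume "x \<in> space M"
      then have "\<bar>X x\<bar> \<le> 2" "\<bar>Y x\<bar> \<le> 2" using bd by auto
      then have "\<bar>X x\<bar> * \<bar>Y x\<bar> \<le> 2 * 2" by (intro mult_mono) auto
      then show "norm (X x * Y x) \<le> 4" by (simp add: abs_mult)
    qed
  qed (use Xm Ym in auto)
  define a where "a = (\<integral>\<omega>. X \<omega> \<partial>M)"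
  define b where "b = (\<integral>\<omega>. Y \<omega> \<partial>M)"
  have "cov M X Y = (\<integral>\<omega>. X \<omega> * Y \<omega> - (b * X \<omega> + a * Y \<omega>) + a * b \<partial>M)"
    unfolding cov_def a_def[symmetric] b_def[symmetric] by (rule Bochner_Integration.integral_cong) (auto simp: algebra_simps)
  also have "\<dots> = (\<integral>\<omega>. X \<omega> * Y \<omega> \<partial>M) - (b * a + a * b) + a * b"
    using iX iY iXY by (simp add: a_def b_def prob_space)
  finally show ?thesis by (simp add: a_def b_def)
qed


lemma moments:
  fixes X :: "'a \<Rightarrow> real"
  assumes M: "prob_space M" and Xm: "X \<in> borel_measurable M"
    and b: "\<forall>\<omega>\<in>space M. 0 \<le> X \<omega> \<and> X \<omega> \<le> 1"
  defines "a \<equiv> (\<integral>\<omega>. 1 - X \<omega> \<partial>M)" and "s \<equiv> (\<integral>\<omega>. (1 - X \<omega>)\<^sup>2 \<partial>M)"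
  shows "0 \<le> a \<and> a \<le> 1 \<and> a\<^sup>2 \<le> s \<and> s \<le> a"
    and "(\<integral>\<omega>. (X \<omega> - (\<integral>x. X x \<partial>M))\<^sup>2 \<partial>M) = s - a\<^sup>2"
    and "1 - a = (\<integral>\<omega>. X \<omega> \<partial>M)"
proof -
  interpret prob_space M by (rule M)
  have iX: "integrable M X" by (rule integrable_const_bound[where B=1]) (use b Xm in auto)
  have iY: "integrable M (\<lambda>\<omega>. 1 - X \<omega>)" using iX by simp
  have iY2: "integrable M (\<lambda>\<omega>. (1 - X \<omega>)\<^sup>2)"
  proof (rule integrable_const_bound[where B=1])
    show "AE x in M. norm ((1 - X x)\<^sup>2) \<le> 1"
      using b by (intro AE_I2) (auto simp: abs_square_le_1)
  qed (use Xm in auto)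
  show a1: "1 - a = (\<integral>\<omega>. X \<omega> \<partial>M)" unfolding a_def using iX by (simp add: prob_space)
  have var: "variance (\<lambda>\<omega>. 1 - X \<omega>) = s - a\<^sup>2"
    unfolding s_def a_def by (rule variance_eq[OF iY iY2])
  have "(\<integral>\<omega>. (X \<omega> - (\<integral>x. X x \<partial>M))\<^sup>2 \<partial>M) = variance (\<lambda>\<omega>. 1 - X \<omega>)"
    unfolding a1[symmetric] a_def by (rule Bochner_Integration.integral_cong) (auto simp: power2_eq_square algebra_simps)
  then show v: "(\<integral>\<omega>. (X \<omega> - (\<integral>x. X x \<partial>M))\<^sup>2 \<partial>M) = s - a\<^sup>2" using var by simp
  have "0 \<le> variance (\<lambda>\<omega>. 1 - X \<omega>)" by (rule integral_nonneg_AE) auto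
  then have 1: "a\<^sup>2 \<le> s" using var by simp
  have 2: "0 \<le> a" unfolding a_def using b by (intro integral_nonneg_AE AE_I2) auto
  have 3: "a \<le> 1"
  proof -
    have "a \<le> (\<integral>\<omega>. 1 \<partial>M)" unfolding a_def using iY b by (intro integral_mono) auto
    then show ?thesis by (simp add: prob_space)
  qed
  have 4: "s \<le> a" unfolding s_def a_def using iY iY2 b
    by (intro integral_mono) (auto simp: power2_eq_square mult_left_le_one_le)
  show "0 \<le> a \<and> a \<le> 1 \<and> a\<^sup>2 \<le> s \<and> s \<le> a" using 1 2 3 4 by auto
qed

lemma cov_cong:
  assumes "\<forall>\<omega>\<in>space M. X \<omega> = X' \<omega> \<and> Y \<omega> = Y' \<omega>"
  shows "cov M X Y = cov M X' Y'"
proof -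
  have "(\<integral>x. X x \<partial>M) = (\<integral>x. X' x \<partial>M)" "(\<integral>x. Y x \<partial>M) = (\<integral>x. Y' x \<partial>M)"
    using assms by (auto intro: Bochner_Integration.integral_cong)
  then show ?thesis unfolding cov_def using assms by (auto intro: Bochner_Integration.integral_cong)
qed

lemma sum_Sigma_fst:
  fixes g :: "nat \<Rightarrow> real"
  assumes "finite A" "\<forall>k\<in>A. finite (B k)"
  shows "(\<Sum>p\<in>Sigma A B. g (fst p)) = (\<Sum>k\<in>A. real (card (B k)) * g k)"
proof -
  have "(\<Sum>p\<in>Sigma A B. g (fst p)) = (\<Sum>(x,y)\<in>Sigma A B. g x)" by (simp add: case_prod_beta)
  also have "\<dots> = (\<Sum>x\<in>A. \<Sum>y\<in>B x. g x)" using assms by (subst sum.Sigma) auto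
  finally show ?thesis by simp
qed


theorem lemma3p1:
  fixes M :: "'a measure"
    and m :: nat
    and N :: "nat \<Rightarrow> nat"
    and \<pi> :: "nat \<Rightarrow> real"
    and V :: "nat \<Rightarrow> nat \<Rightarrow> nat \<Rightarrow> 'a \<Rightarrow> real"
    and C :: "nat \<Rightarrow> nat \<Rightarrow> nat \<Rightarrow> nat \<Rightarrow> 'a \<Rightarrow> bool"
    and i j1 j2 :: nat
    and t u :: "nat \<Rightarrow> real"
  defines "Ntot \<equiv> (\<Sum>i\<in>{1..m}. N i)"
  defines "Nt \<equiv> (\<lambda>k. real Ntot * \<pi> k)"
  defines "mu \<equiv> (\<lambda>k i. (\<integral>\<omega>. V k 1 i \<omega> \<partial>M))"
  defines "lam \<equiv> (\<lambda>k i. (\<integral>\<omega>. (V k 1 i \<omega> - (\<integral>x. V k 1 i x \<partial>M))\<^sup>2 \<partial>M))"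
  assumes M: "prob_space M"
    and m: "m \<ge> 1"
    and N_pos: "\<forall>i\<in>{1..m}. N i \<ge> 1"
    and \<pi>_pos: "\<forall>i\<in>{1..m}. \<pi> i > 0"
    and V_meas: "\<forall>k l i. V k l i \<in> borel_measurable M"
    and V_range: "\<forall>k\<in>{1..m}. \<forall>l\<ge>1. \<forall>i\<in>{1..m}. \<forall>\<omega>\<in>space M. 0 \<le> V k l i \<omega> \<and> V k l i \<omega> \<le> 1"
    and V_indep: "prob_space.indep_vars M (\<lambda>_. PiM {1..m} (\<lambda>_. (borel :: real measure)))
                    (\<lambda>(k, l) \<omega>. restrict (\<lambda>i. V k l i \<omega>) {1..m}) ({1..m} \<times> {1..})"
    and V_ident: "\<forall>k\<in>{1..m}. \<forall>l\<ge>1.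
                    distr M (PiM {1..m} (\<lambda>_. (borel :: real measure))) (\<lambda>\<omega>. restrict (\<lambda>i. V k l i \<omega>) {1..m})
                  = distr M (PiM {1..m} (\<lambda>_. (borel :: real measure))) (\<lambda>\<omega>. restrict (\<lambda>i. V k 1 i \<omega>) {1..m})"
    and C_meas: "\<forall>k l i j. {\<omega> \<in> space M. C k l i j \<omega>} \<in> sets M"
    and C_cond: "\<forall>A\<in>Vsigma M m V. \<forall>P b. finite P \<and>
                   P \<subseteq> {(k, l, i, j). k \<in> {1..m} \<and> 1 \<le> l \<and> i \<in> {1..m} \<and> j \<in> {1..N i}} \<longrightarrow>
                   measure M (A \<inter> {\<omega> \<in> space M. \<forall>(k, l, i, j)\<in>P. C k l i j \<omega> = b (k, l, i, j)})
                 = (\<integral>\<omega>. indicator A \<omega> *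
                      (\<Prod>(k, l, i, j)\<in>P. if b (k, l, i, j) then V k l i \<omega> else 1 - V k l i \<omega>) \<partial>M)"
    and i: "i \<in> {1..m}"
    and j: "1 \<le> j1" "j1 < j2" "j2 \<le> N i"
    and tu: "\<forall>k\<in>{1..m}. t k \<ge> 0 \<and> u k \<ge> 0"
  shows "0 \<le> cov M (chi m Nt C i j1 t) (chi m Nt C i j2 u)
       \<and> cov M (chi m Nt C i j1 t) (chi m Nt C i j2 u)
           \<le> (\<Sum>k\<in>{1..m}. min (t k) (u k) * Nt k * lam k i)
       \<and> \<bar>cov M (\<lambda>\<omega>. chi m Nt C i j1 t \<omega> - chi m Nt C i j1 u \<omega>)
                (\<lambda>\<omega>. chi m Nt C i j2 t \<omega> - chi m Nt C i j2 u \<omega>)\<bar>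
           \<le> 6 * (\<Sum>k\<in>{1..m}. (real_of_int \<lfloor>max (t k) (u k) * Nt k\<rfloor>
                                 - real_of_int \<lfloor>min (t k) (u k) * Nt k\<rfloor>) * mu k i)
               * (\<Sum>k\<in>{1..m}. min (t k) (u k) * Nt k * lam k i)
             + 2 * (\<Sum>k\<in>{1..m}. (real_of_int \<lfloor>max (t k) (u k) * Nt k\<rfloor>
                                 - real_of_int \<lfloor>min (t k) (u k) * Nt k\<rfloor>) * lam k i)"
proof -
  interpret P: prob_space M by (rule M)
  have Nt0: "0 \<le> Nt k" if "k \<in> {1..m}" for k
  proof -
    have "0 < \<pi> k" using \<pi>_pos that by auto
    then show ?thesis unfolding Nt_def by simp
  qed
  define S where "S = (\<lambda>t::nat \<Rightarrow> real. SIGMA k:{1..m}. {1..nat \<lfloor>t k * Nt k\<rfloor>})"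
  have finS: "finite (S t')" for t' unfolding S_def by auto
  have subS: "S t' \<subseteq> {1..m} \<times> {1..}" for t' unfolding S_def by auto
  define Xn where "Xn = (\<lambda>j Q. indicator {\<omega>\<in>space M. \<forall>p\<in>Q. \<not> C (fst p) (snd p) i j \<omega>} :: 'a \<Rightarrow> real)"
  have Bset: "{\<omega>\<in>space M. \<forall>p\<in>Q. \<not> C (fst p) (snd p) i' j \<omega>} \<in> sets M" if "finite Q" for Q i' j
    using that
  proof (intro sets.sets_Collect_finite_All)
    fix p assume "p \<in> Q"
    show "{\<omega>\<in>space M. \<not> C (fst p) (snd p) i' j \<omega>} \<in> sets M"
      using C_meas by (intro sets.sets_Collect_neg) auto
  qed
  have Xm: "Xn j Q \<in> borel_measurable M" if "finite Q" for j Q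
    unfolding Xn_def using Bset[OF that] by (rule borel_measurable_indicator)
  have Xb: "0 \<le> Xn j Q \<omega> \<and> Xn j Q \<omega> \<le> 1" for j Q \<omega> unfolding Xn_def by (auto simp: indicator_def)
  have chiX: "chi m Nt C i j t' \<omega> = 1 - Xn j (S t') \<omega>" if "\<omega> \<in> space M" for j t' \<omega>
  proof -
    have "(\<exists>k\<in>{1..m}. \<exists>l. 1 \<le> l \<and> int l \<le> \<lfloor>t' k * Nt k\<rfloor> \<and> C k l i j \<omega>) \<longleftrightarrow> \<not> (\<forall>p\<in>S t'. \<not> C (fst p) (snd p) i j \<omega>)"
    proof -
      have key: "\<And>l z. 1 \<le> l \<Longrightarrow> (int l \<le> z) = (l \<le> nat z)"
        by (case_tac "0 \<le> z") (auto simp: le_nat_iff)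
      show ?thesis unfolding S_def using key by auto (metis atLeastAtMost_iff key)+
    qed
    then show ?thesis unfolding chi_def Xn_def using that by (auto simp: indicator_def)
  qed
  define a where "a = (\<lambda>k. \<integral>\<omega>. 1 - V k 1 i \<omega> \<partial>M)"
  define s where "s = (\<lambda>k. \<integral>\<omega>. (1 - V k 1 i \<omega>)\<^sup>2 \<partial>M)"
  have pair: "(\<integral>\<omega>. Xn j1 Q1 \<omega> * Xn j2 Q2 \<omega> \<partial>M) = FF a s Q1 Q2"
    if Q: "finite Q1" "finite Q2" "Q1 \<subseteq> {1..m} \<times> {1..}" "Q2 \<subseteq> {1..m} \<times> {1..}" for Q1 Q2
  proof -
    define f1 where "f1 = (\<lambda>p::nat\<times>nat. (fst p, snd p, i, j1))"
    define f2 where "f2 = (\<lambda>p::nat\<times>nat. (fst p, snd p, i, j2))"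
    define P where "P = f1 ` Q1 \<union> f2 ` Q2"
    define B where "B = {\<omega>\<in>space M. \<forall>(k, l, i, j)\<in>P. C k l i j \<omega> = False}"
    have B: "B = {\<omega>\<in>space M. \<forall>p\<in>Q1. \<not> C (fst p) (snd p) i j1 \<omega>} \<inter> {\<omega>\<in>space M. \<forall>p\<in>Q2. \<not> C (fst p) (snd p) i j2 \<omega>}"
      unfolding B_def P_def f1_def f2_def by (auto simp: ball_Un)
    have Bs: "B \<in> sets M" unfolding B using Bset Q by auto
    have "(\<integral>\<omega>. Xn j1 Q1 \<omega> * Xn j2 Q2 \<omega> \<partial>M) = (\<integral>\<omega>. indicator B \<omega> \<partial>M)"
      unfolding B Xn_def by (simp add: indicator_inter_arith)
    also have "\<dots> = measure M B" using Bs by simp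
    also have "\<dots> = measure M (space M \<inter> B)" using sets.sets_into_space[OF Bs] by (simp add: Int_absorb1)
    also have "\<dots> = (\<integral>\<omega>. indicator (space M) \<omega> * (\<Prod>(k, l, i, j)\<in>P. if False then V k l i \<omega> else 1 - V k l i \<omega>) \<partial>M)"
    proof -
      have A: "space M \<in> Vsigma M m V" unfolding Vsigma_def by (rule sigma_sets_top)
      have fP: "finite P" unfolding P_def using Q by auto
      have sP: "P \<subseteq> {(k, l, i, j). k \<in> {1..m} \<and> 1 \<le> l \<and> i \<in> {1..m} \<and> j \<in> {1..N i}}"
        unfolding P_def f1_def f2_def using Q j i by auto
      show ?thesis using C_cond[rule_format, OF A, of P "\<lambda>_. False"] fP sP unfolding B_def by simp
    qed
    also have "\<dots> = (\<integral>\<omega>. (\<Prod>p\<in>Q1 \<union> Q2. (if p \<in> Q1 then 1 - V (fst p) (snd p) i \<omega> else 1) * (if p \<in> Q2 then 1 - V (fst p) (snd p) i \<omega> else 1)) \<partial>M)"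
    proof (rule Bochner_Integration.integral_cong[OF refl])
      fix \<omega> assume "\<omega> \<in> space M"
      have i1: "inj_on f1 Q1" "inj_on f2 Q2" unfolding f1_def f2_def by (auto intro!: inj_onI simp: prod_eq_iff)
      have dj: "f1 ` Q1 \<inter> f2 ` Q2 = {}" unfolding f1_def f2_def using j by auto
      have "(\<Prod>(k, l, i, j)\<in>P. if False then V k l i \<omega> else 1 - V k l i \<omega>)
          = (\<Prod>p\<in>Q1. 1 - V (fst p) (snd p) i \<omega>) * (\<Prod>p\<in>Q2. 1 - V (fst p) (snd p) i \<omega>)"
        unfolding P_def using Q dj i1
        by (simp add: prod.union_disjoint prod.reindex) (simp add: f1_def f2_def case_prod_beta)
      also have "\<dots> = (\<Prod>p\<in>Q1 \<union> Q2. (if p \<in> Q1 then 1 - V (fst p) (snd p) i \<omega> else 1) * (if p \<in> Q2 then 1 - V (fst p) (snd p) i \<omega> else 1))"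
        using Q by (simp add: prod.distrib prod.inter_restrict[symmetric] Int_absorb1 Int_absorb2)
      finally show "indicator (space M) \<omega> * (\<Prod>(k, l, i, j)\<in>P. if False then V k l i \<omega> else 1 - V k l i \<omega>) = \<dots>"
        using \<open>\<omega> \<in> space M\<close> by simp
    qed
    also have "\<dots> = (\<Prod>p\<in>Q1 \<union> Q2. \<integral>\<omega>. (if p \<in> Q1 then 1 - V (fst p) (snd p) i \<omega> else 1) * (if p \<in> Q2 then 1 - V (fst p) (snd p) i \<omega> else 1) \<partial>M)"
    proof (rule indep_prod[OF M V_indep V_meas _ _ i, where f="\<lambda>p v. (if p \<in> Q1 then 1 - v else 1) * (if p \<in> Q2 then 1 - v else 1)"])
      show "finite (Q1 \<union> Q2)" using Q by auto
      show "Q1 \<union> Q2 \<subseteq> {1..m} \<times> {1..}" using Q by auto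
      fix p \<omega> assume p: "p \<in> Q1 \<union> Q2" and w: "\<omega> \<in> space M"
      have "fst p \<in> {1..m}" "1 \<le> snd p" using p Q by auto
      then have "0 \<le> V (fst p) (snd p) i \<omega> \<and> V (fst p) (snd p) i \<omega> \<le> 1" using V_range i w by auto
      then show "\<bar>(if p \<in> Q1 then 1 - V (fst p) (snd p) i \<omega> else 1) * (if p \<in> Q2 then 1 - V (fst p) (snd p) i \<omega> else 1)\<bar> \<le> 1"
        by (auto simp: abs_mult intro: mult_le_one)
    next
      fix p
      show "(\<lambda>v::real. (if p \<in> Q1 then 1 - v else 1) * (if p \<in> Q2 then 1 - v else 1)) \<in> borel_measurable borel"
        by (cases "p \<in> Q1"; cases "p \<in> Q2") (auto intro!: borel_measurable_continuous_onI continuous_intros)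
    qed
    also have "\<dots> = FF a s Q1 Q2"
      unfolding FF_def
    proof (rule prod.cong[OF refl])
      fix p assume p: "p \<in> Q1 \<union> Q2"
      have k: "fst p \<in> {1..m}" "1 \<le> snd p" using p Q by auto
      have e: "(\<integral>\<omega>. h (V (fst p) (snd p) i \<omega>) \<partial>M) = (\<integral>\<omega>. h (V (fst p) 1 i \<omega>) \<partial>M)"
        if "h \<in> borel_measurable borel" for h :: "real \<Rightarrow> real"
        by (rule ident_int[OF V_meas V_ident[rule_format, OF k(1) k(2)] i that])
      show "(\<integral>\<omega>. (if p \<in> Q1 then 1 - V (fst p) (snd p) i \<omega> else 1) * (if p \<in> Q2 then 1 - V (fst p) (snd p) i \<omega> else 1) \<partial>M)
          = (if p \<in> Q1 \<inter> Q2 then s (fst p) else a (fst p))"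
        using e[of "\<lambda>v. (if p \<in> Q1 then 1 - v else 1) * (if p \<in> Q2 then 1 - v else 1)"] p
        unfolding a_def s_def by (auto simp: power2_eq_square)
    qed
    finally show ?thesis .
  qed

  have Vk: "V k 1 i \<in> borel_measurable M" "\<forall>\<omega>\<in>space M. 0 \<le> V k 1 i \<omega> \<and> V k 1 i \<omega> \<le> 1"
    if "k \<in> {1..m}" for k using V_meas V_range that i by auto
  have as: "\<forall>k\<in>{1..m}. 0 \<le> a k \<and> a k \<le> 1 \<and> (a k)\<^sup>2 \<le> s k \<and> s k \<le> a k"
    using moments(1)[OF M Vk] unfolding a_def s_def by blast
  have lam_eq: "lam k i = s k - (a k)\<^sup>2" if "k \<in> {1..m}" for k
    using moments(2)[OF M Vk[OF that]] unfolding a_def s_def lam_def by simp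
  have mu_eq: "mu k i = 1 - a k" if "k \<in> {1..m}" for k
    using moments(3)[OF M Vk[OF that]] unfolding a_def mu_def by simp
  have Xint: "integrable M (Xn j Q)" if "finite Q" for j Q
    by (rule P.integrable_const_bound[where B=1]) (use Xb Xm[OF that] in auto)
  have XXint: "integrable M (\<lambda>\<omega>. Xn j Q \<omega> * Xn j' Q' \<omega>)" if "finite Q" "finite Q'" for j Q j' Q'
  proof (rule P.integrable_const_bound[where B=1])
    show "AE x in M. norm (Xn j Q x * Xn j' Q' x) \<le> 1"
      using Xb by (intro AE_I2) (auto simp: abs_mult intro: mult_le_one)
  qed (use Xm that in auto)
  have X0: "Xn j {} \<omega> = 1" if "\<omega> \<in> space M" for j \<omega> unfolding Xn_def using that by simp
  have FFc: "FF a s Q1 Q2 = FF a s Q2 Q1" for Q1 Q2 unfolding FF_def by (simp add: Un_commute Int_commute)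
  have single1: "(\<integral>\<omega>. Xn j1 Q \<omega> \<partial>M) = FF a s Q {}" if "finite Q" "Q \<subseteq> {1..m} \<times> {1..}" for Q
  proof -
    have "(\<integral>\<omega>. Xn j1 Q \<omega> \<partial>M) = (\<integral>\<omega>. Xn j1 Q \<omega> * Xn j2 {} \<omega> \<partial>M)"
      using X0 by (intro Bochner_Integration.integral_cong) auto
    then show ?thesis using pair[of Q "{}"] that by simp
  qed
  have single2: "(\<integral>\<omega>. Xn j2 Q \<omega> \<partial>M) = FF a s Q {}" if "finite Q" "Q \<subseteq> {1..m} \<times> {1..}" for Q
  proof -
    have "(\<integral>\<omega>. Xn j2 Q \<omega> \<partial>M) = (\<integral>\<omega>. Xn j1 {} \<omega> * Xn j2 Q \<omega> \<partial>M)"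
      using X0 by (intro Bochner_Integration.integral_cong) auto
    then show ?thesis using pair[of "{}" Q] that FFc by simp
  qed
  define T where "T = S t"
  define U where "U = S u"
  have fT: "finite T" "finite U" and sT: "T \<subseteq> {1..m} \<times> {1..}" "U \<subseteq> {1..m} \<times> {1..}"
    unfolding T_def U_def using finS subS by auto
  have sT': "T \<subseteq> {1..m} \<times> UNIV" "U \<subseteq> {1..m} \<times> UNIV" using sT by auto
  note R = real_part[OF fT sT' as]
  have bd2: "\<forall>\<omega>\<in>space M. \<bar>X \<omega>\<bar> \<le> 2 \<and> \<bar>Y \<omega>\<bar> \<le> 2"
    if "\<forall>\<omega>\<in>space M. \<bar>X \<omega>\<bar> \<le> 1 \<and> \<bar>Y \<omega>\<bar> \<le> 1" for X Y :: "'a \<Rightarrow> real" using that by force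
  have cov1: "cov M (chi m Nt C i j1 t) (chi m Nt C i j2 u) = FF a s T U - FF a s T {} * FF a s U {}"
  proof -
    have "cov M (chi m Nt C i j1 t) (chi m Nt C i j2 u) = cov M (\<lambda>\<omega>. 1 - Xn j1 T \<omega>) (\<lambda>\<omega>. 1 - Xn j2 U \<omega>)"
      by (rule cov_cong) (simp add: chiX T_def U_def)
    also have "\<dots> = (\<integral>\<omega>. (1 - Xn j1 T \<omega>) * (1 - Xn j2 U \<omega>) \<partial>M) - (\<integral>\<omega>. 1 - Xn j1 T \<omega> \<partial>M) * (\<integral>\<omega>. 1 - Xn j2 U \<omega> \<partial>M)"
    proof (rule cov_eq[OF M])
      show "\<forall>\<omega>\<in>space M. \<bar>1 - Xn j1 T \<omega>\<bar> \<le> 2 \<and> \<bar>1 - Xn j2 U \<omega>\<bar> \<le> 2"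
        using Xb by (smt (verit))
    qed (use Xm fT in auto)
    also have "(\<integral>\<omega>. (1 - Xn j1 T \<omega>) * (1 - Xn j2 U \<omega>) \<partial>M) = (\<integral>\<omega>. (1 - Xn j1 T \<omega> - Xn j2 U \<omega>) + Xn j1 T \<omega> * Xn j2 U \<omega> \<partial>M)"
      by (simp add: algebra_simps)
    also have "\<dots> = 1 - FF a s T {} - FF a s U {} + FF a s T U"
      using Xint[OF fT(1)] Xint[OF fT(2)] XXint[OF fT] single1[OF fT(1) sT(1)] single2[OF fT(2) sT(2)] pair[OF fT sT]
      by (simp add: P.prob_space)
    also have "(\<integral>\<omega>. 1 - Xn j1 T \<omega> \<partial>M) = 1 - FF a s T {}"
      using Xint[OF fT(1)] single1[OF fT(1) sT(1)] by (simp add: P.prob_space)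
    also have "(\<integral>\<omega>. 1 - Xn j2 U \<omega> \<partial>M) = 1 - FF a s U {}"
      using Xint[OF fT(2)] single2[OF fT(2) sT(2)] by (simp add: P.prob_space)
    finally show ?thesis by (simp add: algebra_simps)
  qed
  have cov2: "cov M (\<lambda>\<omega>. chi m Nt C i j1 t \<omega> - chi m Nt C i j1 u \<omega>) (\<lambda>\<omega>. chi m Nt C i j2 t \<omega> - chi m Nt C i j2 u \<omega>)
      = FF a s U U - 2 * FF a s T U + FF a s T T - (FF a s U {} - FF a s T {})\<^sup>2"
  proof -
    have "cov M (\<lambda>\<omega>. chi m Nt C i j1 t \<omega> - chi m Nt C i j1 u \<omega>) (\<lambda>\<omega>. chi m Nt C i j2 t \<omega> - chi m Nt C i j2 u \<omega>)
       = cov M (\<lambda>\<omega>. Xn j1 U \<omega> - Xn j1 T \<omega>) (\<lambda>\<omega>. Xn j2 U \<omega> - Xn j2 T \<omega>)"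
      by (rule cov_cong) (simp add: chiX T_def U_def)
    also have "\<dots> = (\<integral>\<omega>. (Xn j1 U \<omega> - Xn j1 T \<omega>) * (Xn j2 U \<omega> - Xn j2 T \<omega>) \<partial>M)
        - (\<integral>\<omega>. Xn j1 U \<omega> - Xn j1 T \<omega> \<partial>M) * (\<integral>\<omega>. Xn j2 U \<omega> - Xn j2 T \<omega> \<partial>M)"
    proof (rule cov_eq[OF M])
      show "\<forall>\<omega>\<in>space M. \<bar>Xn j1 U \<omega> - Xn j1 T \<omega>\<bar> \<le> 2 \<and> \<bar>Xn j2 U \<omega> - Xn j2 T \<omega>\<bar> \<le> 2"
        using Xb by (smt (verit))
    qed (use Xm fT in auto)
    also have "(\<integral>\<omega>. (Xn j1 U \<omega> - Xn j1 T \<omega>) * (Xn j2 U \<omega> - Xn j2 T \<omega>) \<partial>M)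
       = (\<integral>\<omega>. (Xn j1 U \<omega> * Xn j2 U \<omega> - Xn j1 U \<omega> * Xn j2 T \<omega>) - (Xn j1 T \<omega> * Xn j2 U \<omega> - Xn j1 T \<omega> * Xn j2 T \<omega>) \<partial>M)"
      by (simp add: algebra_simps)
    also have "\<dots> = (FF a s U U - FF a s U T) - (FF a s T U - FF a s T T)"
      using XXint[OF fT(2) fT(2)] XXint[OF fT(2) fT(1)] XXint[OF fT(1) fT(2)] XXint[OF fT(1) fT(1)]
        pair[OF fT(2) fT(2) sT(2) sT(2)] pair[OF fT(2) fT(1) sT(2) sT(1)] pair[OF fT(1) fT(2) sT(1) sT(2)] pair[OF fT(1) fT(1) sT(1) sT(1)]
      by simp
    also have "(\<integral>\<omega>. Xn j1 U \<omega> - Xn j1 T \<omega> \<partial>M) = FF a s U {} - FF a s T {}"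
      using Xint[OF fT(1)] Xint[OF fT(2)] single1[OF fT(1) sT(1)] single1[OF fT(2) sT(2)] by simp
    also have "(\<integral>\<omega>. Xn j2 U \<omega> - Xn j2 T \<omega> \<partial>M) = FF a s U {} - FF a s T {}"
      using Xint[OF fT(1)] Xint[OF fT(2)] single2[OF fT(1) sT(1)] single2[OF fT(2) sT(2)] by simp
    finally show ?thesis using FFc[of U T] by (simp add: power2_eq_square algebra_simps)
  qed
  define nt where "nt = (\<lambda>k. nat \<lfloor>t k * Nt k\<rfloor>)"
  define nu where "nu = (\<lambda>k. nat \<lfloor>u k * Nt k\<rfloor>)"
  have TI: "T \<inter> U = (SIGMA k:{1..m}. {1..min (nt k) (nu k)})"
    unfolding T_def U_def S_def nt_def nu_def by auto
  have TD: "(T \<union> U) - (T \<inter> U) = (SIGMA k:{1..m}. {min (nt k) (nu k) + 1..max (nt k) (nu k)})"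
    unfolding T_def U_def S_def nt_def nu_def by auto
  have F1: "real (min (nt k) (nu k)) \<le> min (t k) (u k) * Nt k"
    and F2: "real (card {min (nt k) (nu k) + 1..max (nt k) (nu k)})
       = real_of_int \<lfloor>max (t k) (u k) * Nt k\<rfloor> - real_of_int \<lfloor>min (t k) (u k) * Nt k\<rfloor>"
    if k: "k \<in> {1..m}" for k
  proof -
    have n: "0 \<le> Nt k" "0 \<le> t k" "0 \<le> u k" using Nt0[OF k] tu k by auto
    have f0: "0 \<le> \<lfloor>t k * Nt k\<rfloor>" "0 \<le> \<lfloor>u k * Nt k\<rfloor>" using n by auto
    have r: "real (nt k) = real_of_int \<lfloor>t k * Nt k\<rfloor>" "real (nu k) = real_of_int \<lfloor>u k * Nt k\<rfloor>"
      unfolding nt_def nu_def using f0 by auto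
    have "real (min (nt k) (nu k)) \<le> min (t k) (u k) * Nt k
       \<and> real (card {min (nt k) (nu k) + 1..max (nt k) (nu k)})
       = real_of_int \<lfloor>max (t k) (u k) * Nt k\<rfloor> - real_of_int \<lfloor>min (t k) (u k) * Nt k\<rfloor>"
    proof (cases "t k \<le> u k")
      case True
      then have "t k * Nt k \<le> u k * Nt k" using n by (intro mult_right_mono) auto
      then have fl: "\<lfloor>t k * Nt k\<rfloor> \<le> \<lfloor>u k * Nt k\<rfloor>" by (rule floor_mono)
      then have "nt k \<le> nu k" unfolding nt_def nu_def by simp
      then show ?thesis using True r fl by (auto simp: of_nat_diff)
    next
      case False
      then have "u k * Nt k \<le> t k * Nt k" using n by (intro mult_right_mono) auto
      then have fl: "\<lfloor>u k * Nt k\<rfloor> \<le> \<lfloor>t k * Nt k\<rfloor>" by (rule floor_mono)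
      then have "nu k \<le> nt k" unfolding nt_def nu_def by simp
      then show ?thesis using False r fl by (auto simp: of_nat_diff)
    qed
    then show "real (min (nt k) (nu k)) \<le> min (t k) (u k) * Nt k"
      "real (card {min (nt k) (nu k) + 1..max (nt k) (nu k)})
       = real_of_int \<lfloor>max (t k) (u k) * Nt k\<rfloor> - real_of_int \<lfloor>min (t k) (u k) * Nt k\<rfloor>" by auto
  qed
  have lam0: "0 \<le> lam k i" if "k \<in> {1..m}" for k using lam_eq[OF that] as that by auto
  have mu0: "0 \<le> mu k i" if "k \<in> {1..m}" for k using mu_eq[OF that] as that by auto
  define Bnd where "Bnd = (\<Sum>k\<in>{1..m}. min (t k) (u k) * Nt k * lam k i)"
  define DMu where "DMu = (\<Sum>k\<in>{1..m}. (real_of_int \<lfloor>max (t k) (u k) * Nt k\<rfloor> - real_of_int \<lfloor>min (t k) (u k) * Nt k\<rfloor>) * mu k i)"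
  define DLam where "DLam = (\<Sum>k\<in>{1..m}. (real_of_int \<lfloor>max (t k) (u k) * Nt k\<rfloor> - real_of_int \<lfloor>min (t k) (u k) * Nt k\<rfloor>) * lam k i)"
  have SI: "(\<Sum>p\<in>T\<inter>U. s (fst p) - (a (fst p))\<^sup>2) = (\<Sum>k\<in>{1..m}. real (min (nt k) (nu k)) * lam k i)"
    unfolding TI by (subst sum_Sigma_fst) (auto simp: lam_eq)
  have SIB: "(\<Sum>k\<in>{1..m}. real (min (nt k) (nu k)) * lam k i) \<le> Bnd"
    unfolding Bnd_def by (intro sum_mono mult_right_mono F1 lam0)
  have SI0: "0 \<le> (\<Sum>k\<in>{1..m}. real (min (nt k) (nu k)) * lam k i)"
    by (intro sum_nonneg mult_nonneg_nonneg lam0) auto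
  have SXmu: "(\<Sum>p\<in>(T\<union>U)-(T\<inter>U). 1 - a (fst p)) = DMu"
  proof -
    have "(\<Sum>p\<in>(T\<union>U)-(T\<inter>U). 1 - a (fst p)) = (\<Sum>k\<in>{1..m}. real (card {min (nt k) (nu k) + 1..max (nt k) (nu k)}) * (1 - a k))"
      unfolding TD by (rule sum_Sigma_fst) auto
    also have "\<dots> = DMu" unfolding DMu_def by (intro sum.cong refl) (metis F2 mu_eq)
    finally show ?thesis .
  qed
  have SXlam: "(\<Sum>p\<in>(T\<union>U)-(T\<inter>U). s (fst p) - (a (fst p))\<^sup>2) = DLam"
  proof -
    have "(\<Sum>p\<in>(T\<union>U)-(T\<inter>U). s (fst p) - (a (fst p))\<^sup>2) = (\<Sum>k\<in>{1..m}. real (card {min (nt k) (nu k) + 1..max (nt k) (nu k)}) * (s k - (a k)\<^sup>2))"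
      unfolding TD by (rule sum_Sigma_fst) auto
    also have "\<dots> = DLam" unfolding DLam_def by (intro sum.cong refl) (metis F2 lam_eq)
    finally show ?thesis .
  qed
  have DMu0: "0 \<le> DMu" unfolding SXmu[symmetric] using as sT by (intro sum_nonneg) auto
  have DLam0: "0 \<le> DLam" unfolding SXlam[symmetric] using as sT by (intro sum_nonneg) auto
  have Bnd0: "0 \<le> Bnd" using SIB SI0 by linarith
  have h1: "0 \<le> cov M (chi m Nt C i j1 t) (chi m Nt C i j2 u)" using R(1) cov1 by simp
  have h2: "cov M (chi m Nt C i j1 t) (chi m Nt C i j2 u) \<le> (\<Sum>k\<in>{1..m}. min (t k) (u k) * Nt k * lam k i)"
    using R(1) cov1 SI SIB unfolding Bnd_def by linarith
  have c2: "\<bar>cov M (\<lambda>\<omega>. chi m Nt C i j1 t \<omega> - chi m Nt C i j1 u \<omega>) (\<lambda>\<omega>. chi m Nt C i j2 t \<omega> - chi m Nt C i j2 u \<omega>)\<bar>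
       \<le> DMu * (\<Sum>k\<in>{1..m}. real (min (nt k) (nu k)) * lam k i) + DLam"
    using R(2) cov2 SI SXmu SXlam by simp
  have "DMu * (\<Sum>k\<in>{1..m}. real (min (nt k) (nu k)) * lam k i) \<le> DMu * Bnd"
    using SIB DMu0 by (rule mult_left_mono)
  moreover have "0 \<le> DMu * Bnd" using DMu0 Bnd0 by simp
  ultimately have h3: "\<bar>cov M (\<lambda>\<omega>. chi m Nt C i j1 t \<omega> - chi m Nt C i j1 u \<omega>) (\<lambda>\<omega>. chi m Nt C i j2 t \<omega> - chi m Nt C i j2 u \<omega>)\<bar>
       \<le> 6 * DMu * Bnd + 2 * DLam" using c2 DLam0 by linarith
  show ?thesis using h1 h2 h3[unfolded DMu_def Bnd_def DLam_def] by blast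
qed

end
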